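(* Let $k\geq 0$ and $n\geq k$ be integers, and let $G$ be a $k$-degenerate graph of order $n$. Then $\mu(G)<\mu(S_{n,k})$, unless $G=S_{n,k}$.
   Context: All graphs are finite and simple. A graph $G$ is $k$-degenerate if every subgraph of $G$ contains a vertex of degree at most $k$. $S_{n,k}$ denotes the join of a complete graph of order $k$ and an independent set of order $n-k$ (every vertex of the $K_k$ is adjacent to every other vertex). For a graph $H$, $\mu(H)$ denotes the largest eigenvalue of the adjacency matrix of $H$. *)

theory Defs
  imports Complex_Main
begin

definition simple_graph :: "'a set \<Rightarrow> ('a \<Rightarrow> 'a \<Rightarrow> bool) \<Rightarrow> bool" where
  "simple_graph V E \<longleftrightarrow> finite V \<and> (\<forall>u\<in>V. \<forall>w\<in>V. E u w \<longrightarrow> E w u) \<and> (\<forall>u\<in>V. \<not> E u u)"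

definition degenerate :: "nat \<Rightarrow> 'a set \<Rightarrow> ('a \<Rightarrow> 'a \<Rightarrow> bool) \<Rightarrow> bool" where
  "degenerate k V E \<longleftrightarrow>
     (\<forall>U F. U \<subseteq> V \<longrightarrow> U \<noteq> {} \<longrightarrow> (\<forall>u w. F u w \<longrightarrow> E u w) \<longrightarrow>
        (\<exists>u\<in>U. card {w\<in>U. F u w} \<le> k))"

definition adj_eigenvalues :: "'a set \<Rightarrow> ('a \<Rightarrow> 'a \<Rightarrow> bool) \<Rightarrow> real set" where
  "adj_eigenvalues V E = {lam. \<exists>x :: 'a \<Rightarrow> real. (\<exists>v\<in>V. x v \<noteq> 0) \<and>
      (\<forall>u\<in>V. (\<Sum>w\<in>V. (if E u w then 1 else 0) * x w) = lam * x u)}"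

text \<open>Largest eigenvalue of the adjacency matrix (the adjacency matrix is real
  symmetric, so all its eigenvalues are real).\<close>
definition mu :: "'a set \<Rightarrow> ('a \<Rightarrow> 'a \<Rightarrow> bool) \<Rightarrow> real" where
  "mu V E = Max (adj_eigenvalues V E)"

text \<open>S_{n,k}: vertices 0..n-1; vertices 0..k-1 form a clique, the rest an independent
  set, and every clique vertex is adjacent to every other vertex.\<close>
definition S_verts :: "nat \<Rightarrow> nat set" where
  "S_verts n = {0..<n}"

definition S_edge :: "nat \<Rightarrow> nat \<Rightarrow> nat \<Rightarrow> bool" where
  "S_edge k i j \<longleftrightarrow> i \<noteq> j \<and> (i < k \<or> j < k)"

definition graph_iso :: "'a set \<Rightarrow> ('a \<Rightarrow> 'a \<Rightarrow> bool) \<Rightarrow> 'b set \<Rightarrow> ('b \<Rightarrow> 'b \<Rightarrow> bool) \<Rightarrow> bool" where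
  "graph_iso V E W F \<longleftrightarrow> (\<exists>f. bij_betw f V W \<and> (\<forall>u\<in>V. \<forall>w\<in>V. E u w \<longleftrightarrow> F (f u) (f w)))"

end

theory Submission
  imports Defs "Jordan_Normal_Form.Spectral_Radius"
begin

definition eigs :: "'a set \<Rightarrow> ('a \<Rightarrow> 'a \<Rightarrow> real) \<Rightarrow> real set" where
  "eigs V a = {lam. \<exists>x. (\<exists>v\<in>V. x v \<noteq> 0) \<and> (\<forall>u\<in>V. (\<Sum>w\<in>V. a u w * x w) = lam * x u)}"

lemma eigs_finite:
  fixes a :: "'a \<Rightarrow> 'a \<Rightarrow> real"
  assumes fin: "finite V"
  shows "finite (eigs V a)"
proof -
  define n where "n = card V"
  obtain f where bij: "bij_betw f {0..<n} V" using ex_bij_betw_nat_finite[OF fin] n_def by blast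
  define M where "M = mat n n (\<lambda>(i,j). complex_of_real (a (f i) (f j)))"
  have M: "M \<in> carrier_mat n n" unfolding M_def by simp
  have "eigs V a \<subseteq> Re ` spectrum M"
  proof
    fix lam assume "lam \<in> eigs V a"
    then obtain x where nz: "\<exists>v\<in>V. x v \<noteq> 0" and ev: "\<forall>u\<in>V. (\<Sum>w\<in>V. a u w * x w) = lam * x u"
      unfolding eigs_def by blast
    define v where "v = vec n (\<lambda>i. complex_of_real (x (f i)))"
    have vc: "v \<in> carrier_vec n" unfolding v_def by simp
    from nz obtain u where u: "u \<in> V" "x u \<noteq> 0" by blast
    then obtain i where i: "i < n" "f i = u" using bij unfolding bij_betw_def by auto
    have "v \<noteq> 0\<^sub>v n"
    proof
      assume "v = 0\<^sub>v n"
      hence "v $ i = 0" using i by simp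
      thus False using i u unfolding v_def by simp
    qed
    moreover have "M *\<^sub>v v = complex_of_real lam \<cdot>\<^sub>v v"
    proof (rule eq_vecI)
      fix i assume i: "i < dim_vec (complex_of_real lam \<cdot>\<^sub>v v)"
      hence i': "i < n" unfolding v_def by simp
      have fi: "f i \<in> V" using bij i' unfolding bij_betw_def by auto
      have "(M *\<^sub>v v) $ i = (\<Sum>j = 0..<n. complex_of_real (a (f i) (f j) * x (f j)))"
        using i' unfolding M_def v_def by (simp add: scalar_prod_def row_def)
      also have "\<dots> = complex_of_real (\<Sum>j = 0..<n. a (f i) (f j) * x (f j))" by simp
      also have "(\<Sum>j = 0..<n. a (f i) (f j) * x (f j)) = (\<Sum>w\<in>V. a (f i) w * x w)"
        using sum.reindex_bij_betw[OF bij, of "\<lambda>w. a (f i) w * x w"] by simp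
      also have "\<dots> = lam * x (f i)" using ev fi by blast
      finally show "(M *\<^sub>v v) $ i = (complex_of_real lam \<cdot>\<^sub>v v) $ i"
        using i' unfolding v_def by simp
    next
      show "dim_vec (M *\<^sub>v v) = dim_vec (complex_of_real lam \<cdot>\<^sub>v v)"
        unfolding M_def v_def by simp
    qed
    ultimately have "eigenvector M v (complex_of_real lam)"
      unfolding eigenvector_def using vc M by simp
    hence "complex_of_real lam \<in> spectrum M"
      unfolding spectrum_def eigenvalue_def by blast
    thus "lam \<in> Re ` spectrum M" by force
  qed
  moreover have "finite (spectrum M)" using card_finite_spectrum[OF M] by simp
  ultimately show ?thesis using finite_surj by blast
qed

lemma complex_eig_exists:
  fixes a :: "'a \<Rightarrow> 'a \<Rightarrow> real"
  assumes fin: "finite V" and ne: "V \<noteq> {}"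
  shows "\<exists>mu y. (\<exists>u\<in>V. y u \<noteq> 0) \<and> (\<forall>u\<in>V. (\<Sum>w\<in>V. complex_of_real (a u w) * y w) = mu * y u)"
proof -
  define n where "n = card V"
  have n: "n > 0" using fin ne n_def by (simp add: card_gt_0_iff)
  obtain f where bij: "bij_betw f {0..<n} V" using ex_bij_betw_nat_finite[OF fin] n_def by blast
  define M where "M = mat n n (\<lambda>(i,j). complex_of_real (a (f i) (f j)))"
  have M: "M \<in> carrier_mat n n" unfolding M_def by simp
  obtain mu where "mu \<in> spectrum M" using spectrum_non_empty[OF M n] by blast
  then obtain v where ev: "eigenvector M v mu" unfolding spectrum_def eigenvalue_def by auto
  hence vc: "v \<in> carrier_vec n" and vnz: "v \<noteq> 0\<^sub>v n" and Mv: "M *\<^sub>v v = mu \<cdot>\<^sub>v v"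
    unfolding eigenvector_def using M by auto
  define g where "g = inv_into {0..<n} f"
  have gf: "\<And>j. j < n \<Longrightarrow> g (f j) = j" unfolding g_def using bij
    by (simp add: bij_betw_inv_into_left)
  define y where "y w = v $ (g w)" for w
  have yf: "\<And>j. j < n \<Longrightarrow> y (f j) = v $ j" unfolding y_def using gf by simp
  have "\<exists>i<n. v $ i \<noteq> 0"
  proof (rule ccontr)
    assume "\<not> ?thesis"
    hence "v = 0\<^sub>v n" using vc by (intro eq_vecI) auto
    thus False using vnz by simp
  qed
  then obtain i where i: "i < n" "v $ i \<noteq> 0" by blast
  have fiV: "\<And>i. i < n \<Longrightarrow> f i \<in> V" using bij unfolding bij_betw_def by auto
  have "\<forall>u\<in>V. (\<Sum>w\<in>V. complex_of_real (a u w) * y w) = mu * y u"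
  proof
    fix u assume u: "u \<in> V"
    then obtain i where i: "i < n" "f i = u" using bij unfolding bij_betw_def by auto
    have "(\<Sum>w\<in>V. complex_of_real (a u w) * y w) = (\<Sum>j = 0..<n. complex_of_real (a u (f j)) * y (f j))"
      using sum.reindex_bij_betw[OF bij, of "\<lambda>w. complex_of_real (a u w) * y w"] by simp
    also have "\<dots> = (\<Sum>j = 0..<n. M $$ (i, j) * v $ j)"
      using i yf unfolding M_def by (intro sum.cong) auto
    also have "\<dots> = (M *\<^sub>v v) $ i" using i vc M unfolding M_def
      by (simp add: scalar_prod_def row_def)
    also have "\<dots> = mu * v $ i" using Mv i vc by simp
    also have "\<dots> = mu * y u" using yf[OF i(1)] i(2) by simp
    finally show "(\<Sum>w\<in>V. complex_of_real (a u w) * y w) = mu * y u" .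
  qed
  moreover have "y (f i) \<noteq> 0" using yf i by simp
  ultimately show ?thesis using fiV i by blast
qed

lemma real_eig_from_complex:
  fixes a :: "'a \<Rightarrow> 'a \<Rightarrow> real" and y :: "'a \<Rightarrow> complex"
  assumes fin: "finite V" and sym: "\<And>u w. u \<in> V \<Longrightarrow> w \<in> V \<Longrightarrow> a u w = a w u"
    and nz: "\<exists>u\<in>V. y u \<noteq> 0"
    and ev: "\<forall>u\<in>V. (\<Sum>w\<in>V. complex_of_real (a u w) * y w) = cc * y u"
  shows "\<exists>lam x. (\<exists>v\<in>V. x v \<noteq> 0) \<and> (\<forall>u\<in>V. (\<Sum>w\<in>V. a u w * x w) = lam * x u)"
proof -
  define s where "s = (\<Sum>u\<in>V. cnj (y u) * (\<Sum>w\<in>V. complex_of_real (a u w) * y w))"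
  define N where "N = (\<Sum>u\<in>V. (Re (y u))^2 + (Im (y u))^2)"
  have s1: "s = cc * complex_of_real N"
  proof -
    have "s = (\<Sum>u\<in>V. cnj (y u) * (cc * y u))" unfolding s_def using ev by (intro sum.cong) auto
    also have "\<dots> = cc * (\<Sum>u\<in>V. y u * cnj (y u))" by (simp add: sum_distrib_left algebra_simps)
    also have "(\<Sum>u\<in>V. y u * cnj (y u)) = complex_of_real N" unfolding N_def
      by (simp add: complex_mult_cnj)
    finally show ?thesis .
  qed
  have s2: "cnj s = s"
  proof -
    have "cnj s = (\<Sum>u\<in>V. \<Sum>w\<in>V. complex_of_real (a u w) * y u * cnj (y w))"
      unfolding s_def by (simp add: sum_distrib_left algebra_simps)
    also have "\<dots> = (\<Sum>w\<in>V. \<Sum>u\<in>V. complex_of_real (a u w) * y u * cnj (y w))"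
      by (rule sum.swap)
    also have "\<dots> = (\<Sum>w\<in>V. \<Sum>u\<in>V. complex_of_real (a w u) * cnj (y w) * y u)"
      using sym by (intro sum.cong refl) (simp add: algebra_simps)
    also have "\<dots> = s" unfolding s_def by (simp add: sum_distrib_left algebra_simps)
    finally show ?thesis .
  qed
  from nz obtain u0 where u0: "u0 \<in> V" "y u0 \<noteq> 0" by blast
  have Npos: "N > 0"
  proof -
    have "(Re (y u0))^2 + (Im (y u0))^2 > 0" using u0 complex_eq_iff by (simp add: sum_power2_gt_zero_iff)
    moreover have "(Re (y u0))^2 + (Im (y u0))^2 \<le> N" unfolding N_def
      by (rule member_le_sum) (use fin u0 in auto)
    ultimately show ?thesis by linarith
  qed
  have "Im s = 0" using s2 by (metis cnj.simps(2) neg_equal_zero)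
  hence "Im cc * N = 0" using s1 by simp
  hence imz: "Im cc = 0" using Npos by simp
  define x1 where "x1 w = Re (y w)" for w
  define x2 where "x2 w = Im (y w)" for w
  have e1: "\<forall>u\<in>V. (\<Sum>w\<in>V. a u w * x1 w) = Re cc * x1 u"
  proof
    fix u assume u: "u \<in> V"
    have "(\<Sum>w\<in>V. a u w * x1 w) = Re (\<Sum>w\<in>V. complex_of_real (a u w) * y w)"
      unfolding x1_def by (simp add: Re_sum)
    also have "\<dots> = Re (cc * y u)" using ev u by simp
    also have "\<dots> = Re cc * x1 u" unfolding x1_def using imz by simp
    finally show "(\<Sum>w\<in>V. a u w * x1 w) = Re cc * x1 u" .
  qed
  have e2: "\<forall>u\<in>V. (\<Sum>w\<in>V. a u w * x2 w) = Re cc * x2 u"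
  proof
    fix u assume u: "u \<in> V"
    have "(\<Sum>w\<in>V. a u w * x2 w) = Im (\<Sum>w\<in>V. complex_of_real (a u w) * y w)"
      unfolding x2_def by (simp add: Im_sum)
    also have "\<dots> = Im (cc * y u)" using ev u by simp
    also have "\<dots> = Re cc * x2 u" unfolding x2_def using imz by simp
    finally show "(\<Sum>w\<in>V. a u w * x2 w) = Re cc * x2 u" .
  qed
  have "x1 u0 \<noteq> 0 \<or> x2 u0 \<noteq> 0" using u0 unfolding x1_def x2_def by (simp add: complex_eq_iff)
  thus ?thesis using e1 e2 u0 by blast
qed

definition ind :: "('a \<Rightarrow> 'a \<Rightarrow> bool) \<Rightarrow> 'a \<Rightarrow> 'a \<Rightarrow> real" where
  "ind E u w = (if E u w then 1 else 0)"
definition qf :: "'a set \<Rightarrow> ('a \<Rightarrow> 'a \<Rightarrow> bool) \<Rightarrow> ('a \<Rightarrow> real) \<Rightarrow> real" where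
  "qf U E x = (\<Sum>u\<in>U. \<Sum>w\<in>U. ind E u w * x u * x w)"
definition nsq :: "'a set \<Rightarrow> ('a \<Rightarrow> real) \<Rightarrow> real" where
  "nsq U x = (\<Sum>u\<in>U. (x u)^2)"
definition SD :: "'a set \<Rightarrow> 'a \<Rightarrow> 'a \<Rightarrow> bool" where
  "SD D u w \<longleftrightarrow> u \<noteq> w \<and> (u \<in> D \<or> w \<in> D)"

lemma qf_eig:
  assumes "\<forall>u\<in>V. (\<Sum>w\<in>V. ind E u w * x w) = lam * x u"
  shows "qf V E x = lam * nsq V x"
proof -
  have "qf V E x = (\<Sum>u\<in>V. x u * (\<Sum>w\<in>V. ind E u w * x w))"
    unfolding qf_def by (simp add: sum_distrib_left algebra_simps)
  also have "\<dots> = (\<Sum>u\<in>V. lam * (x u)^2)" using assms by (intro sum.cong) (auto simp: power2_eq_square)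
  finally show ?thesis unfolding nsq_def by (simp add: sum_distrib_left)
qed

lemma qf_abs: "qf V E x \<le> qf V E (\<lambda>u. \<bar>x u\<bar>)"
  unfolding qf_def
proof (intro sum_mono)
  fix u w
  have "ind E u w * x u * x w \<le> ind E u w * \<bar>x u\<bar> * \<bar>x w\<bar>"
    unfolding ind_def by (simp add: abs_mult[symmetric] abs_ge_self)
  thus "ind E u w * x u * x w \<le> ind E u w * \<bar>x u\<bar> * \<bar>x w\<bar>" .
qed

lemma sum_sq_cauchy:
  fixes y :: "'a \<Rightarrow> real"
  assumes "finite D"
  shows "(\<Sum>u\<in>D. y u)^2 \<le> real (card D) * (\<Sum>u\<in>D. (y u)^2)"
proof -
  have "0 \<le> (\<Sum>u\<in>D. \<Sum>w\<in>D. (y u - y w)^2)" by (intro sum_nonneg) auto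
  also have "\<dots> = (\<Sum>u\<in>D. \<Sum>w\<in>D. (y u)^2 + (y w)^2 - 2 * y u * y w)"
    by (simp add: power2_diff)
  also have "\<dots> = 2 * real (card D) * (\<Sum>u\<in>D. (y u)^2) - 2 * (\<Sum>u\<in>D. y u)^2"
    by (simp add: sum.distrib sum_subtractf sum_distrib_left sum_distrib_right power2_eq_square
        algebra_simps)
  finally show ?thesis by simp
qed

lemma qf_SD:
  fixes y :: "'a \<Rightarrow> real"
  assumes fin: "finite U" and DU: "D \<subseteq> U"
  shows "qf U (SD D) y = (\<Sum>u\<in>D. y u)^2 - (\<Sum>u\<in>D. (y u)^2) + 2 * (\<Sum>u\<in>D. y u) * (\<Sum>u\<in>U-D. y u)"
proof -
  have finD: "finite D" using fin DU finite_subset by blast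
  have U: "U = D \<union> (U - D)" using DU by blast
  have sp: "\<And>f. (\<Sum>w\<in>U. f w) = (\<Sum>w\<in>D. f w) + (\<Sum>w\<in>U-D. f w)"
    using sum.subset_diff[OF DU fin] by (simp add: add.commute)
  have "qf U (SD D) y = (\<Sum>u\<in>D. \<Sum>w\<in>U. ind (SD D) u w * y u * y w) + (\<Sum>u\<in>U-D. \<Sum>w\<in>U. ind (SD D) u w * y u * y w)"
    unfolding qf_def by (rule sp)
  also have "(\<Sum>u\<in>D. \<Sum>w\<in>U. ind (SD D) u w * y u * y w) = (\<Sum>u\<in>D. (y u * (\<Sum>w\<in>D. y w) - y u * y u) + y u * (\<Sum>w\<in>U-D. y w))"
  proof (rule sum.cong[OF refl])
    fix u assume u: "u \<in> D"
    have "(\<Sum>w\<in>U. ind (SD D) u w * y u * y w) = (\<Sum>w\<in>D. ind (SD D) u w * y u * y w) + (\<Sum>w\<in>U-D. ind (SD D) u w * y u * y w)"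
      by (rule sp)
    also have "(\<Sum>w\<in>D. ind (SD D) u w * y u * y w) = (\<Sum>w\<in>D. y u * y w - (if u = w then y u * y u else 0))"
      using u by (intro sum.cong) (auto simp: ind_def SD_def)
    also have "\<dots> = y u * (\<Sum>w\<in>D. y w) - y u * y u"
      using u finD by (simp add: sum_subtractf sum_distrib_left)
    also have "(\<Sum>w\<in>U-D. ind (SD D) u w * y u * y w) = y u * (\<Sum>w\<in>U-D. y w)"
      unfolding sum_distrib_left using u by (intro sum.cong) (auto simp: ind_def SD_def)
    finally show "(\<Sum>w\<in>U. ind (SD D) u w * y u * y w) = (y u * (\<Sum>w\<in>D. y w) - y u * y u) + y u * (\<Sum>w\<in>U-D. y w)" .
  qed
  also have "(\<Sum>u\<in>U-D. \<Sum>w\<in>U. ind (SD D) u w * y u * y w) = (\<Sum>u\<in>U-D. y u * (\<Sum>w\<in>D. y w))"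
  proof (rule sum.cong[OF refl])
    fix u assume u: "u \<in> U - D"
    have "(\<Sum>w\<in>U. ind (SD D) u w * y u * y w) = (\<Sum>w\<in>D. ind (SD D) u w * y u * y w) + (\<Sum>w\<in>U-D. ind (SD D) u w * y u * y w)"
      by (rule sp)
    also have "(\<Sum>w\<in>D. ind (SD D) u w * y u * y w) = (\<Sum>w\<in>D. y u * y w)"
      using u by (intro sum.cong) (auto simp: ind_def SD_def)
    also have "(\<Sum>w\<in>U-D. ind (SD D) u w * y u * y w) = 0"
      using u by (simp add: ind_def SD_def)
    finally show "(\<Sum>w\<in>U. ind (SD D) u w * y u * y w) = y u * (\<Sum>w\<in>D. y w)" by (simp add: sum_distrib_left)
  qed
  finally have "qf U (SD D) y = (\<Sum>u\<in>D. (y u * (\<Sum>w\<in>D. y w) - y u * y u) + y u * (\<Sum>w\<in>U-D. y w)) + (\<Sum>u\<in>U-D. y u * (\<Sum>w\<in>D. y w))" .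
  also have "\<dots> = (\<Sum>u\<in>D. y u) * (\<Sum>w\<in>D. y w) - (\<Sum>u\<in>D. y u * y u) + (\<Sum>u\<in>D. y u) * (\<Sum>w\<in>U-D. y w) + (\<Sum>u\<in>U-D. y u) * (\<Sum>w\<in>D. y w)"
    by (simp add: sum.distrib sum_subtractf sum_distrib_right)
  finally show ?thesis by (simp add: power2_eq_square algebra_simps)
qed

definition topk :: "'a set \<Rightarrow> ('a \<Rightarrow> real) \<Rightarrow> 'a set \<Rightarrow> bool" where
  "topk U x D \<longleftrightarrow> (\<forall>d\<in>D. \<forall>r\<in>U-D. x r \<le> x d)"

lemma qf_remove:
  assumes fin: "finite U" and v: "v \<in> U"
    and sym: "\<And>u w. u \<in> U \<Longrightarrow> w \<in> U \<Longrightarrow> F u w \<longleftrightarrow> F w u" and irr: "\<not> F v v"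
  shows "qf U F x = qf (U-{v}) F x + 2 * x v * (\<Sum>w\<in>U-{v}. ind F v w * x w)"
proof -
  have "qf U F x = (\<Sum>w\<in>U. ind F v w * x v * x w) + (\<Sum>u\<in>U-{v}. \<Sum>w\<in>U. ind F u w * x u * x w)"
    unfolding qf_def using sum.remove[OF fin v] by blast
  also have "(\<Sum>w\<in>U. ind F v w * x v * x w) = ind F v v * x v * x v + (\<Sum>w\<in>U-{v}. ind F v w * x v * x w)"
    using sum.remove[OF fin v] by blast
  also have "(\<Sum>u\<in>U-{v}. \<Sum>w\<in>U. ind F u w * x u * x w) = (\<Sum>u\<in>U-{v}. ind F u v * x u * x v + (\<Sum>w\<in>U-{v}. ind F u w * x u * x w))"
    using sum.remove[OF fin v] by (intro sum.cong) auto
  also have "\<dots> = (\<Sum>u\<in>U-{v}. ind F v u * x v * x u) + qf (U-{v}) F x"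
    unfolding qf_def sum.distrib using sym v by (intro arg_cong2[where f="(+)"] sum.cong refl) (auto simp: ind_def)
  finally show ?thesis using irr by (simp add: ind_def sum_distrib_left algebra_simps)
qed

lemma sum_topk:
  fixes x :: "'a \<Rightarrow> real"
  assumes fin: "finite U" and NU: "N \<subseteq> U" and DU: "D \<subseteq> U" and card: "card N \<le> card D"
    and top: "topk U x D" and nn: "\<forall>u\<in>U. 0 \<le> x u"
  shows "(\<Sum>u\<in>N. x u) \<le> (\<Sum>u\<in>D. x u)"
proof -
  have finN: "finite N" and finD: "finite D" using fin NU DU finite_subset by auto
  have c: "card (N - D) \<le> card (D - N)"
  proof -
    have "card (N - D) = card N - card (N \<inter> D)" using finN by (simp add: card_Diff_subset_Int)
    moreover have "card (D - N) = card D - card (N \<inter> D)" using finD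
      by (simp add: card_Diff_subset_Int Int_commute)
    ultimately show ?thesis using card by simp
  qed
  have "(\<Sum>u\<in>N-D. x u) \<le> (\<Sum>u\<in>D-N. x u)"
  proof (cases "D - N = {}")
    case True
    hence "card (N - D) = 0" using c by (metis card.empty le_zero_eq)
    hence "N - D = {}" using finN by simp
    thus ?thesis using True by simp
  next
    case False
    define t where "t = Min (x ` (D - N))"
    have t1: "\<forall>d\<in>D-N. t \<le> x d" unfolding t_def using finD by auto
    have t2: "\<forall>r\<in>N-D. x r \<le> t"
    proof
      fix r assume r: "r \<in> N - D"
      have "t \<in> x ` (D - N)" unfolding t_def using False finD by (intro Min_in) auto
      then obtain d where d: "d \<in> D - N" "t = x d" by blast
      show "x r \<le> t" using top r d NU unfolding topk_def by blast
    qed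
    have tnn: "0 \<le> t"
    proof -
      obtain d where d: "d \<in> D - N" using False by blast
      have "t \<in> x ` (D - N)" unfolding t_def using False finD by (intro Min_in) auto
      then obtain d where d: "d \<in> D - N" "t = x d" by blast
      thus ?thesis using nn DU by auto
    qed
    have "(\<Sum>u\<in>N-D. x u) \<le> (\<Sum>u\<in>N-D. t)" using t2 by (intro sum_mono) auto
    also have "\<dots> = card (N - D) * t" by simp
    also have "\<dots> \<le> card (D - N) * t" using c tnn by (simp add: mult_right_mono)
    also have "\<dots> = (\<Sum>u\<in>D-N. t)" by simp
    also have "\<dots> \<le> (\<Sum>u\<in>D-N. x u)" using t1 by (intro sum_mono) auto
    finally show ?thesis .
  qed
  moreover have "(\<Sum>u\<in>N. x u) = (\<Sum>u\<in>N\<inter>D. x u) + (\<Sum>u\<in>N-D. x u)"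
    using finN by (metis sum.Int_Diff)
  moreover have "(\<Sum>u\<in>D. x u) = (\<Sum>u\<in>N\<inter>D. x u) + (\<Sum>u\<in>D-N. x u)"
    using finD by (metis sum.Int_Diff inf.commute)
  ultimately show ?thesis by linarith
qed

lemma swap_ok:
  fixes x :: "'a \<Rightarrow> real"
  assumes fin: "finite U" and DU: "D' \<subseteq> U" and w: "w \<in> D'" and v: "v \<in> U - D'"
    and nn: "\<forall>u\<in>U. 0 \<le> x u" and le: "x w \<le> x v"
  shows "qf U (SD D') x \<le> qf U (SD (insert v (D' - {w}))) x"
proof -
  define D where "D = insert v (D' - {w})"
  have finD': "finite D'" using fin DU finite_subset by blast
  have DU2: "D \<subseteq> U" unfolding D_def using DU v by auto
  have s1: "(\<Sum>u\<in>D. x u) = (\<Sum>u\<in>D'. x u) - x w + x v"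
    unfolding D_def using v w finD' by (simp add: sum_diff1)
  have s2: "(\<Sum>u\<in>D. (x u)^2) = (\<Sum>u\<in>D'. (x u)^2) - (x w)^2 + (x v)^2"
    unfolding D_def using v w finD' by (simp add: sum_diff1)
  have UD: "U - D = insert w ((U - D') - {v})" unfolding D_def using w v DU by auto
  have s3: "(\<Sum>u\<in>U-D. x u) = (\<Sum>u\<in>(U-D')-{v}. x u) + x w"
    unfolding UD using fin w by (simp add: add.commute)
  have s4: "(\<Sum>u\<in>U-D'. x u) = (\<Sum>u\<in>(U-D')-{v}. x u) + x v"
    using fin v by (simp add: sum_diff1)
  have Bnn: "0 \<le> (\<Sum>u\<in>(U-D')-{v}. x u)" using nn by (intro sum_nonneg) auto
  define A where "A = (\<Sum>u\<in>D'. x u)"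
  define S where "S = (\<Sum>u\<in>D'. (x u)^2)"
  define B where "B = (\<Sum>u\<in>(U-D')-{v}. x u)"
  have q1: "qf U (SD D') x = A^2 - S + 2 * A * (B + x v)"
    using qf_SD[OF fin DU, of x] s4 unfolding A_def S_def B_def by simp
  have q2: "qf U (SD D) x = (A - x w + x v)^2 - (S - (x w)^2 + (x v)^2) + 2 * (A - x w + x v) * (B + x w)"
    using qf_SD[OF fin DU2, of x] s1 s2 s3 unfolding A_def S_def B_def by simp
  have "qf U (SD D) x - qf U (SD D') x = 2 * (x v - x w) * B"
    unfolding q1 q2 by (simp add: power2_eq_square algebra_simps)
  moreover have "0 \<le> 2 * (x v - x w) * B" using le Bnn unfolding B_def by simp
  ultimately show ?thesis unfolding D_def by simp
qed

lemma qf_complete: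
  fixes x :: "'a \<Rightarrow> real"
  assumes irr: "\<forall>u\<in>U. \<not> E u u" and nn: "\<forall>u\<in>U. 0 \<le> x u"
  shows "qf U E x \<le> qf U (SD U) x"
  unfolding qf_def
proof (intro sum_mono)
  fix u w assume "u \<in> U" "w \<in> U"
  thus "ind E u w * x u * x w \<le> ind (SD U) u w * x u * x w"
    using irr nn unfolding ind_def SD_def by auto
qed

lemma degen_main:
  fixes x :: "'a \<Rightarrow> real"
  assumes sg: "simple_graph V E" and dg: "degenerate k V E" and nn: "\<forall>u\<in>V. 0 \<le> x u"
  shows "U \<subseteq> V \<Longrightarrow> card U = m \<Longrightarrow> k \<le> m \<Longrightarrow>
     \<exists>D\<subseteq>U. card D = k \<and> topk U x D \<and> qf U E x \<le> qf U (SD D) x"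
proof (induction m arbitrary: U)
    case 0
    have finV: "finite V" using sg unfolding simple_graph_def by auto
    have "k = 0" using 0 by simp
    have "finite U" using 0 finV finite_subset by blast
    hence "U = {}" using 0 by simp
    show ?case using 0 \<open>k = 0\<close> \<open>U = {}\<close> by (intro exI[of _ "{}"]) (simp add: topk_def qf_def)
  next
    case (Suc m)
    have finV: "finite V" and symV: "\<forall>u\<in>V. \<forall>w\<in>V. E u w \<longrightarrow> E w u" and irrV: "\<forall>u\<in>V. \<not> E u u"
      using sg unfolding simple_graph_def by auto
    have finU: "finite U" using Suc.prems finV finite_subset by blast
    have nnU: "\<forall>u\<in>U. 0 \<le> x u" using nn Suc.prems by auto
    show ?case
    proof (cases "k = Suc m")
      case True
      show ?thesis
        using Suc.prems True irrV nnU qf_complete[of U E x]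
        by (intro exI[of _ U]) (auto simp: topk_def)
    next
      case False
      hence km: "k \<le> m" using Suc.prems by simp
      have "U \<noteq> {}" using Suc.prems by auto
      then obtain v where v: "v \<in> U" and dv: "card {w\<in>U. E v w} \<le> k"
        using dg Suc.prems(1) unfolding degenerate_def by (elim allE[of _ U] allE[of _ E]) auto
      define U' where "U' = U - {v}"
      have U'V: "U' \<subseteq> V" and cU': "card U' = m" using Suc.prems v finU unfolding U'_def by auto
      obtain D' where D'U: "D' \<subseteq> U'" and cD': "card D' = k" and top': "topk U' x D'"
        and q': "qf U' E x \<le> qf U' (SD D') x"
        using Suc.IH[OF U'V cU' km] by blast
      have vD': "v \<notin> D'" using D'U unfolding U'_def by auto
      have symU: "\<And>u w. u \<in> U \<Longrightarrow> w \<in> U \<Longrightarrow> E u w \<longleftrightarrow> E w u" using symV Suc.prems by blast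
      have irrv: "\<not> E v v" using irrV Suc.prems v by blast
      have e1: "qf U E x = qf U' E x + 2 * x v * (\<Sum>w\<in>U'. ind E v w * x w)"
        unfolding U'_def by (rule qf_remove[where F=E, OF finU v symU irrv])
      have symS: "\<And>u w. u \<in> U \<Longrightarrow> w \<in> U \<Longrightarrow> SD D' u w \<longleftrightarrow> SD D' w u" unfolding SD_def by auto
      have irrS: "\<not> SD D' v v" unfolding SD_def by simp
      have e2: "qf U (SD D') x = qf U' (SD D') x + 2 * x v * (\<Sum>w\<in>U'. ind (SD D') v w * x w)"
        unfolding U'_def by (rule qf_remove[where F="SD D'", OF finU v symS irrS])
      have finU': "finite U'" using finU unfolding U'_def by simp
      define N where "N = {w\<in>U'. E v w}"
      have "(\<Sum>w\<in>U'. ind E v w * x w) = (\<Sum>w\<in>N. x w)"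
        unfolding N_def sum.inter_filter[OF finU'] by (intro sum.cong) (auto simp: ind_def)
      also have "\<dots> \<le> (\<Sum>w\<in>D'. x w)"
      proof (rule sum_topk[OF finU' _ D'U _ top'])
        show "N \<subseteq> U'" unfolding N_def by auto
        have "N \<subseteq> {w\<in>U. E v w}" unfolding N_def U'_def by auto
        hence "card N \<le> card {w\<in>U. E v w}" using finU by (intro card_mono) auto
        thus "card N \<le> card D'" using dv cD' by simp
        show "\<forall>u\<in>U'. 0 \<le> x u" using nnU unfolding U'_def by auto
      qed
      also have "(\<Sum>w\<in>D'. x w) = (\<Sum>w\<in>U'. ind (SD D') v w * x w)"
      proof -
        have "(\<Sum>w\<in>U'. ind (SD D') v w * x w) = (\<Sum>w\<in>U'. if w \<in> D' then x w else 0)"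
          using vD' by (intro sum.cong) (auto simp: ind_def SD_def U'_def)
        also have "\<dots> = (\<Sum>w\<in>U' \<inter> D'. x w)" using sum.inter_restrict[OF finU'] by metis
        also have "U' \<inter> D' = D'" using D'U by blast
        finally show ?thesis by simp
      qed
      finally have "(\<Sum>w\<in>U'. ind E v w * x w) \<le> (\<Sum>w\<in>U'. ind (SD D') v w * x w)" .
      hence "2 * x v * (\<Sum>w\<in>U'. ind E v w * x w) \<le> 2 * x v * (\<Sum>w\<in>U'. ind (SD D') v w * x w)"
        using nnU v by (intro mult_left_mono) auto
      hence qU: "qf U E x \<le> qf U (SD D') x" using e1 e2 q' by linarith
      have D'U2: "D' \<subseteq> U" using D'U unfolding U'_def by auto
      show ?thesis
      proof (cases "\<forall>d\<in>D'. x v \<le> x d")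
        case True
        have "topk U x D'" using top' True v unfolding topk_def U'_def by auto
        thus ?thesis using qU D'U2 cD' by blast
      next
        case False
        then obtain d0 where d0: "d0 \<in> D'" "x d0 < x v" by auto
        have finD': "finite D'" using D'U finU' finite_subset by blast
        define w where "w = arg_min_on x D'"
        have wD: "w \<in> D'" and wmin: "\<forall>d\<in>D'. x w \<le> x d"
        proof -
          have ne: "D' \<noteq> {}" using d0 by auto
          show "w \<in> D'" unfolding w_def using arg_min_if_finite(1)[OF finD' ne] .
          show "\<forall>d\<in>D'. x w \<le> x d" unfolding w_def using arg_min_if_finite(2)[OF finD' ne, of x]
            by (auto simp: not_less)
        qed
        have wle: "x w \<le> x v" using wmin d0 by force
        define D where "D = insert v (D' - {w})"
        have "qf U (SD D') x \<le> qf U (SD D) x"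
          unfolding D_def by (rule swap_ok[OF finU D'U2 wD _ nnU wle]) (use v vD' in auto)
        moreover have "D \<subseteq> U" unfolding D_def using D'U2 v by auto
        moreover have "card D = k"
        proof -
          have "card (D' - {w}) = k - 1" using finD' wD cD' by simp
          moreover have "v \<notin> D' - {w}" using vD' by simp
          moreover have "k \<ge> 1" using wD cD' finD' by (metis One_nat_def Suc_leI card_gt_0_iff empty_iff)
          ultimately show ?thesis unfolding D_def using finD' by simp
        qed
        moreover have "topk U x D"
          unfolding topk_def
        proof (intro ballI)
          fix d r assume d: "d \<in> D" and r: "r \<in> U - D"
          have r': "r = w \<or> r \<in> U' - D'" using r unfolding D_def U'_def by auto
          show "x r \<le> x d"
          proof (cases "d = v")
            case True
            thus ?thesis using r' wle top' wD unfolding topk_def by force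
          next
            case False
            hence dD': "d \<in> D'" using d unfolding D_def by auto
            thus ?thesis using r' wmin top' unfolding topk_def by force
          qed
        qed
        ultimately show ?thesis using qU order.trans[of "qf U E x" "qf U (SD D') x" "qf U (SD D) x"]
          by blast
      qed
    qed
qed

definition rho :: "nat \<Rightarrow> nat \<Rightarrow> real" where
  "rho n k = ((real k - 1) + sqrt ((real k - 1)^2 + 4 * real k * (real n - real k))) / 2"

lemma rho_facts:
  assumes "k \<le> n"
  shows "(rho n k)^2 = (real k - 1) * rho n k + real k * (real n - real k)"
    and "rho n k \<ge> real k - 1" and "rho n k \<ge> 0"
proof -
  define c where "c = real k - 1"
  define q where "q = c^2 + 4 * real k * (real n - real k)"
  have q0: "q \<ge> 0" unfolding q_def using assms by simp
  define s where "s = sqrt q"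
  have s2: "s^2 = q" unfolding s_def using q0 by simp
  have sc: "s \<ge> \<bar>c\<bar>"
  proof -
    have "c^2 \<le> q" unfolding q_def using assms by simp
    hence "sqrt (c^2) \<le> sqrt q" by (rule real_sqrt_le_mono)
    thus ?thesis unfolding s_def by simp
  qed
  have r: "rho n k = (c + s) / 2" unfolding rho_def c_def s_def q_def by simp
  show "(rho n k)^2 = (real k - 1) * rho n k + real k * (real n - real k)"
    unfolding r c_def[symmetric] using s2 unfolding q_def by (simp add: power2_eq_square field_simps)
  have "c \<le> s" "-c \<le> s" using sc abs_ge_self[of c] abs_ge_minus_self[of c] by linarith+
  thus "rho n k \<ge> real k - 1" "rho n k \<ge> 0" unfolding r c_def by (auto simp: field_simps)
qed

lemma rho_0: "rho n 0 = 0" unfolding rho_def by simp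

lemma rho_nk: assumes "k \<ge> 1" shows "rho k k = real k - 1"
  unfolding rho_def using assms by simp

lemma rho_gek:
  assumes "k \<ge> 1" "k + 1 \<le> n"
  shows "rho n k \<ge> real k" and "k + 2 \<le> n \<Longrightarrow> rho n k > real k"
proof -
  have f: "(rho n k)^2 = (real k - 1) * rho n k + real k * (real n - real k)" "rho n k \<ge> 0"
    using rho_facts assms by auto
  have e: "(rho n k - real k) * (rho n k + 1) = real k * (real n - real k - 1)"
    using f(1) by (simp add: power2_eq_square algebra_simps)
  have "real k * (real n - real k - 1) \<ge> 0" using assms by simp
  hence "(rho n k - real k) * (rho n k + 1) \<ge> 0" using e by simp
  thus "rho n k \<ge> real k" using f(2) by (smt (verit) mult_neg_pos)
  assume "k + 2 \<le> n"
  hence "real k * (real n - real k - 1) > 0" using assms by simp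
  hence "(rho n k - real k) * (rho n k + 1) > 0" using e by simp
  thus "rho n k > real k" using f(2) by (smt (verit) mult_nonpos_nonneg)
qed

lemma S_bound:
  fixes y :: "'a \<Rightarrow> real"
  assumes fin: "finite U" and DU: "D \<subseteq> U" and cD: "card D = k" and cU: "card U = n"
  shows "qf U (SD D) y \<le> rho n k * nsq U y"
proof -
  have kn: "k \<le> n" using card_mono[OF fin DU] cD cU by simp
  have finD: "finite D" using fin DU finite_subset by blast
  define a where "a = (\<Sum>u\<in>D. y u)"
  define b where "b = (\<Sum>u\<in>U-D. y u)"
  define Sa where "Sa = (\<Sum>u\<in>D. (y u)^2)"
  define Sb where "Sb = (\<Sum>u\<in>U-D. (y u)^2)"
  have q: "qf U (SD D) y = a^2 - Sa + 2 * a * b" unfolding a_def b_def Sa_def by (rule qf_SD[OF fin DU])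
  have ns: "nsq U y = Sa + Sb" unfolding nsq_def Sa_def Sb_def
    using sum.subset_diff[OF DU fin] by (simp add: add.commute)
  have ca: "a^2 \<le> real k * Sa" unfolding a_def Sa_def using sum_sq_cauchy[OF finD] cD by simp
  have cUD: "card (U - D) = n - k" using card_Diff_subset[OF finD DU] cD cU by simp
  have cb: "b^2 \<le> real (n - k) * Sb" unfolding b_def Sb_def using sum_sq_cauchy[of "U - D" y] fin cUD by simp
  have Sa0: "Sa \<ge> 0" "Sb \<ge> 0" unfolding Sa_def Sb_def by (auto intro: sum_nonneg)
  have rf: "(rho n k)^2 = (real k - 1) * rho n k + real k * (real n - real k)"
    "rho n k \<ge> real k - 1" "rho n k \<ge> 0" using rho_facts[OF kn] by auto
  show ?thesis
  proof (cases "k = 0")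
    case True
    hence "D = {}" using cD finD by simp
    thus ?thesis unfolding q a_def Sa_def using True rho_0 by simp
  next
    case k1: False
    show ?thesis
    proof (cases "n = k")
      case True
      hence "U - D = {}" using cUD finD fin by auto
      hence "b = 0" unfolding b_def by (metis sum.empty)
      moreover have "rho n k = real k - 1" using True rho_nk k1 by simp
      moreover have "Sb * rho n k \<ge> 0" using Sa0 rf by simp
      moreover have "Sa * real k = Sa + Sa * rho n k" unfolding \<open>rho n k = real k - 1\<close> by (simp add: right_diff_distrib)
      ultimately show ?thesis unfolding q ns using ca Sa0 by (simp add: algebra_simps)
    next
      case False
      hence nk: "n > k" using kn by simp
      define r where "r = rho n k"
      have rpos: "r > 0"
      proof -
        have "r \<noteq> 0"
        proof
          assume "r = 0"
          hence "real k * (real n - real k) = 0" using rf(1) unfolding r_def by simp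
          thus False using k1 nk by simp
        qed
        thus ?thesis using rf(3) unfolding r_def by simp
      qed
      have kpos: "real k > 0" using k1 by simp
      have nkpos: "real n - real k > 0" using nk by simp
      have cb': "b^2 \<le> (real n - real k) * Sb" using cb nk by (simp add: of_nat_diff)
      have key: "k * (real n - real k) * r * ((r + 1) * Sa + r * Sb - a^2 - 2 * a * b)
           \<ge> k * ((real n - real k) * a - r * b)^2"
      proof -
        have "(r + 1) * Sa * (k * (real n - real k) * r) \<ge> (r + 1) * a^2 * ((real n - real k) * r)"
        proof -
          have "(r+1) * ((real n - real k) * r) \<ge> 0" using rpos nkpos by simp
          hence "(r+1) * ((real n - real k) * r) * a^2 \<le> (r+1) * ((real n - real k) * r) * (k * Sa)"
            using ca by (intro mult_left_mono) auto
          thus ?thesis by (simp add: algebra_simps)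
        qed
        moreover have "r * Sb * (k * (real n - real k) * r) \<ge> r * b^2 * (k * r)"
        proof -
          have "r * (k * r) \<ge> 0" using rpos kpos by simp
          hence "r * (k * r) * b^2 \<le> r * (k * r) * ((real n - real k) * Sb)"
            using cb' by (intro mult_left_mono) auto
          thus ?thesis by (simp add: algebra_simps)
        qed
        moreover have "r * (r + 1 - k) = k * (real n - real k)" using rf(1) unfolding r_def
          by (simp add: power2_eq_square algebra_simps)
        moreover have "k * (real n - real k) * r * ((r + 1) * Sa + r * Sb - a^2 - 2 * a * b) - k * ((real n - real k) * a - r * b)^2
           = ((r + 1) * Sa * (k * (real n - real k) * r) - (r + 1) * a^2 * ((real n - real k) * r))
             + (r * Sb * (k * (real n - real k) * r) - r * b^2 * (k * r))
             + (real n - real k) * a^2 * (r * (r + 1 - k) - k * (real n - real k))"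
          by (simp add: algebra_simps power2_eq_square)
        moreover have "(real n - real k) * a^2 * (r * (r + 1 - k) - k * (real n - real k)) = 0"
          using \<open>r * (r + 1 - k) = k * (real n - real k)\<close> by simp
        ultimately show ?thesis by linarith
      qed
      have "k * ((real n - real k) * a - r * b)^2 \<ge> 0" by simp
      hence "k * (real n - real k) * r * ((r + 1) * Sa + r * Sb - a^2 - 2 * a * b) \<ge> 0" using key by linarith
      moreover have "k * (real n - real k) * r > 0" using kpos nkpos rpos by simp
      ultimately have "(r + 1) * Sa + r * Sb - a^2 - 2 * a * b \<ge> 0"
        using mult_pos_neg[of "k * (real n - real k) * r" "(r + 1) * Sa + r * Sb - a^2 - 2 * a * b"]
        by linarith
      thus ?thesis unfolding q ns r_def[symmetric] by (simp add: algebra_simps)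
    qed
  qed
qed

lemma qf_pert:
  fixes x :: "'a \<Rightarrow> real"
  assumes fin: "finite U" and sym: "\<And>a b. a\<in>U \<Longrightarrow> b\<in>U \<Longrightarrow> F a b \<longleftrightarrow> F b a" and u: "u \<in> U"
  shows "qf U F (\<lambda>w. x w + (if w = u then t else 0)) = qf U F x + 2 * t * (\<Sum>w\<in>U. ind F u w * x w) + t^2 * ind F u u"
proof -
  have "qf U F (\<lambda>w. x w + (if w = u then t else 0)) =
    (\<Sum>a\<in>U. \<Sum>b\<in>U. ind F a b * x a * x b + t * (if a = u then ind F a b * x b else 0)
       + t * (if b = u then ind F a b * x a else 0) + t^2 * (if a = u then (if b = u then ind F a b else 0) else 0))"
    unfolding qf_def by (intro sum.cong refl) (simp add: algebra_simps power2_eq_square)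
  also have "\<dots> = qf U F x + t * (\<Sum>a\<in>U. \<Sum>b\<in>U. (if a = u then ind F a b * x b else 0))
      + t * (\<Sum>a\<in>U. \<Sum>b\<in>U. (if b = u then ind F a b * x a else 0))
      + t^2 * (\<Sum>a\<in>U. \<Sum>b\<in>U. (if a = u then (if b = u then ind F a b else 0) else 0))"
    unfolding qf_def by (simp add: sum.distrib sum_distrib_left)
  also have "(\<Sum>a\<in>U. \<Sum>b\<in>U. (if a = u then ind F a b * x b else 0)) = (\<Sum>w\<in>U. ind F u w * x w)"
  proof -
    have "\<And>a. (\<Sum>b\<in>U. (if a = u then ind F a b * x b else 0)) = (if a = u then (\<Sum>b\<in>U. ind F u b * x b) else 0)"
      by simp
    hence "(\<Sum>a\<in>U. \<Sum>b\<in>U. (if a = u then ind F a b * x b else 0)) = (\<Sum>a\<in>U. (if a = u then (\<Sum>b\<in>U. ind F u b * x b) else 0))"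
      by (intro sum.cong) auto
    also have "\<dots> = (\<Sum>w\<in>U. ind F u w * x w)" using fin u by (simp add: sum.delta)
    finally show ?thesis .
  qed
  also have "(\<Sum>a\<in>U. \<Sum>b\<in>U. (if b = u then ind F a b * x a else 0)) = (\<Sum>a\<in>U. ind F a u * x a)"
    using fin u by (simp add: sum.delta')
  also have "\<dots> = (\<Sum>w\<in>U. ind F u w * x w)"
    using sym u by (intro sum.cong refl) (auto simp: ind_def)
  also have "(\<Sum>a\<in>U. \<Sum>b\<in>U. (if a = u then (if b = u then ind F a b else 0) else 0)) = ind F u u"
  proof -
    have "\<And>a. (\<Sum>b\<in>U. (if a = u then (if b = u then ind F a b else 0) else 0)) = (if a = u then ind F u u else 0)"
      using fin u by (simp add: sum.delta')
    hence "(\<Sum>a\<in>U. \<Sum>b\<in>U. (if a = u then (if b = u then ind F a b else 0) else 0)) = (\<Sum>a\<in>U. (if a = u then ind F u u else 0))"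
      by (intro sum.cong) auto
    also have "\<dots> = ind F u u" using fin u by simp
    finally show ?thesis .
  qed
  finally show ?thesis by (simp add: algebra_simps)
qed

lemma nsq_pert:
  fixes x :: "'a \<Rightarrow> real"
  assumes fin: "finite U" and u: "u \<in> U"
  shows "nsq U (\<lambda>w. x w + (if w = u then t else 0)) = nsq U x + 2 * t * x u + t^2"
proof -
  have "nsq U (\<lambda>w. x w + (if w = u then t else 0)) = (\<Sum>w\<in>U. (x w)^2 + (if w = u then 2 * t * x w + t^2 else 0))"
    unfolding nsq_def by (intro sum.cong refl) (simp add: power2_eq_square algebra_simps)
  also have "\<dots> = nsq U x + 2 * t * x u + t^2" unfolding nsq_def using fin u by (simp add: sum.distrib)
  finally show ?thesis .
qed

lemma rayleigh_eig:
  fixes x :: "'a \<Rightarrow> real"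
  assumes fin: "finite U" and sym: "\<And>a b. a\<in>U \<Longrightarrow> b\<in>U \<Longrightarrow> F a b \<longleftrightarrow> F b a"
    and bnd: "\<And>y. qf U F y \<le> r * nsq U y" and eq: "qf U F x = r * nsq U x" and u: "u \<in> U"
  shows "(\<Sum>w\<in>U. ind F u w * x w) = r * x u"
proof -
  define g where "g = (\<Sum>w\<in>U. ind F u w * x w)"
  define c where "c = r * x u - g"
  define d where "d = r - ind F u u"
  have d0: "d \<ge> 0"
  proof -
    have "qf U F (\<lambda>w. 0 + (if w = u then 1 else 0)) = ind F u u"
      using qf_pert[OF fin sym u, where x="\<lambda>_. 0" and t=1] by (simp add: qf_def)
    moreover have "nsq U (\<lambda>w. 0 + (if w = u then 1 else 0)) = 1"
      using nsq_pert[OF fin u, where x="\<lambda>_. 0" and t=1] by (simp add: nsq_def)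
    ultimately show ?thesis using bnd[of "\<lambda>w. 0 + (if w = u then 1 else 0)"] unfolding d_def by simp
  qed
  have ineq: "0 \<le> 2 * t * c + t^2 * d" for t
  proof -
    have "qf U F (\<lambda>w. x w + (if w = u then t else 0)) \<le> r * nsq U (\<lambda>w. x w + (if w = u then t else 0))"
      by (rule bnd)
    hence "qf U F x + 2 * t * g + t^2 * ind F u u \<le> r * (nsq U x + 2 * t * x u + t^2)"
      using qf_pert[OF fin sym u, where x=x and t=t] nsq_pert[OF fin u, where x=x and t=t]
      unfolding g_def by simp
    thus ?thesis using eq unfolding c_def d_def by (simp add: algebra_simps)
  qed
  have "c = 0"
  proof (rule ccontr)
    assume cnz: "c \<noteq> 0"
    define t where "t = - c / (d + 1)"
    have dp: "d + 1 > 0" using d0 by simp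
    have "0 \<le> (2 * t * c + t^2 * d) * (d + 1)^2" using ineq[of t] dp by simp
    also have "(2 * t * c + t^2 * d) * (d + 1)^2 = 2 * c * (t * (d + 1)) * (d + 1) + d * (t * (d + 1))^2"
      by (simp add: algebra_simps power2_eq_square)
    also have "t * (d + 1) = - c" unfolding t_def using dp by simp
    also have "2 * c * (- c) * (d + 1) + d * (- c)^2 = - (c^2) * (d + 2)"
      by (simp add: algebra_simps power2_eq_square)
    finally have "c^2 * (d + 2) \<le> 0" by simp
    moreover have "c^2 * (d + 2) > 0" using cnz d0 by simp
    ultimately show False by simp
  qed
  thus ?thesis unfolding c_def g_def by simp
qed

lemma iso_SD:
  assumes fin: "finite V" and DV: "D \<subseteq> V" and cD: "card D = k" and cV: "card V = n"
    and eq: "\<forall>u\<in>V. \<forall>w\<in>V. E u w \<longleftrightarrow> SD D u w"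
  shows "graph_iso V E (S_verts n) (S_edge k)"
proof -
  have finD: "finite D" using fin DV finite_subset by blast
  have kn: "k \<le> n" using card_mono[OF fin DV] cD cV by simp
  obtain f1 where f1: "bij_betw f1 D {0..<k}" using finite_same_card_bij[OF finD, of "{0..<k}"] cD by auto
  have cVD: "card (V - D) = card {k..<n}" using card_Diff_subset[OF finD DV] cD cV by simp
  obtain f2 where f2: "bij_betw f2 (V - D) {k..<n}" using finite_same_card_bij[of "V - D" "{k..<n}"] fin cVD by auto
  define f where "f u = (if u \<in> D then f1 u else f2 u)" for u
  have b1: "bij_betw f D {0..<k}" using f1 unfolding f_def by (rule bij_betw_cong[THEN iffD1, rotated]) auto
  have b2: "bij_betw f (V - D) {k..<n}" using f2 unfolding f_def by (rule bij_betw_cong[THEN iffD1, rotated]) auto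
  have "bij_betw f (D \<union> (V - D)) ({0..<k} \<union> {k..<n})" by (rule bij_betw_combine[OF b1 b2]) auto
  moreover have "D \<union> (V - D) = V" using DV by auto
  moreover have "{0..<k} \<union> {k..<n} = {0..<n}" using kn by auto
  ultimately have bij: "bij_betw f V {0..<n}" by simp
  have lt: "\<And>u. u \<in> V \<Longrightarrow> f u < k \<longleftrightarrow> u \<in> D"
  proof -
    fix u assume u: "u \<in> V"
    show "f u < k \<longleftrightarrow> u \<in> D"
    proof (cases "u \<in> D")
      case True thus ?thesis using b1 unfolding bij_betw_def by auto
    next
      case False
      hence "f u \<in> {k..<n}" using b2 u unfolding bij_betw_def by auto
      thus ?thesis using False by simp
    qed
  qed
  have inj: "inj_on f V" using bij unfolding bij_betw_def by simp
  show ?thesis unfolding graph_iso_def S_verts_def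
  proof (intro exI conjI ballI)
    show "bij_betw f V {0..<n}" by (rule bij)
    fix u w assume u: "u \<in> V" and w: "w \<in> V"
    have "f u = f w \<longleftrightarrow> u = w" using inj u w unfolding inj_on_def by blast
    thus "E u w \<longleftrightarrow> S_edge k (f u) (f w)" using eq u w lt[OF u] lt[OF w] unfolding S_edge_def SD_def by blast
  qed
qed

lemma sum2_nonneg_eq_0:
  fixes f :: "'a \<Rightarrow> 'a \<Rightarrow> real"
  assumes fin: "finite V" and nn: "\<And>u w. u \<in> V \<Longrightarrow> w \<in> V \<Longrightarrow> f u w \<ge> 0"
    and z: "(\<Sum>u\<in>V. \<Sum>w\<in>V. f u w) = 0" and u: "u \<in> V" and w: "w \<in> V"
  shows "f u w = 0"
proof -
  have "\<forall>u\<in>V. (\<Sum>w\<in>V. f u w) = 0" using z fin nn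
    by (subst (asm) sum_nonneg_eq_0_iff) (auto intro: sum_nonneg)
  hence "(\<Sum>w\<in>V. f u w) = 0" using u by blast
  thus ?thesis using fin nn u w by (subst (asm) sum_nonneg_eq_0_iff) auto
qed

lemma sum2_ge_term:
  fixes f :: "'a \<Rightarrow> 'a \<Rightarrow> real"
  assumes fin: "finite V" and nn: "\<And>u w. u \<in> V \<Longrightarrow> w \<in> V \<Longrightarrow> f u w \<ge> 0"
    and u: "u \<in> V" and w: "w \<in> V"
  shows "f u w \<le> (\<Sum>u\<in>V. \<Sum>w\<in>V. f u w)"
proof -
  have "f u w \<le> (\<Sum>w\<in>V. f u w)" using fin nn u w by (intro member_le_sum) auto
  also have "\<dots> \<le> (\<Sum>u\<in>V. \<Sum>w\<in>V. f u w)" using fin nn u by (intro member_le_sum sum_nonneg) auto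
  finally show ?thesis .
qed

lemma struct_eq:
  fixes x :: "'a \<Rightarrow> real" and al be :: real
  assumes fin: "finite V" and DV: "D \<subseteq> V" and cD: "card D = k" and cV: "card V = n"
    and irr: "\<forall>u\<in>V. \<not> E u u"
    and cnt: "qf V E (\<lambda>_. 1) \<le> qf V (SD D) (\<lambda>_. 1)"
    and xD: "\<forall>u\<in>D. x u = al" and xR: "\<forall>u\<in>V-D. x u = be"
    and alp: "al > 0" and bep: "be > 0" and ba: "be \<le> al" and ba2: "k + 2 \<le> n \<Longrightarrow> be < al"
    and qeq: "qf V E x = qf V (SD D) x"
  shows "\<forall>u\<in>V. \<forall>w\<in>V. E u w \<longleftrightarrow> SD D u w"
proof -
  define e where "e u w = ind E u w" for u w
  define s where "s u w = ind (SD D) u w" for u w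
  define c where "c u w = x u * x w" for u w
  have cpos: "\<And>u w. u \<in> V \<Longrightarrow> w \<in> V \<Longrightarrow> c u w > 0" unfolding c_def using xD xR alp bep
    by (metis DiffI mult_pos_pos)
  have diff0: "(\<Sum>u\<in>V. \<Sum>w\<in>V. (s u w - e u w) * c u w) = 0"
  proof -
    have "(\<Sum>u\<in>V. \<Sum>w\<in>V. (s u w - e u w) * c u w) = qf V (SD D) x - qf V E x"
      unfolding qf_def s_def e_def c_def by (simp add: sum_subtractf algebra_simps)
    thus ?thesis using qeq by simp
  qed
  have cntd: "(\<Sum>u\<in>V. \<Sum>w\<in>V. s u w - e u w) \<ge> 0"
  proof -
    have "(\<Sum>u\<in>V. \<Sum>w\<in>V. s u w - e u w) = qf V (SD D) (\<lambda>_. 1) - qf V E (\<lambda>_. 1)"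
      unfolding qf_def s_def e_def by (simp add: sum_subtractf)
    thus ?thesis using cnt by simp
  qed
  have es: "\<forall>u\<in>V. \<forall>w\<in>V. E u w \<longrightarrow> SD D u w"
  proof (rule ccontr)
    assume "\<not> ?thesis"
    then obtain u0 w0 where u0: "u0 \<in> V" and w0: "w0 \<in> V" and E0: "E u0 w0" and S0: "\<not> SD D u0 w0" by blast
    have uw: "u0 \<noteq> w0" using irr u0 E0 by blast
    have ud: "u0 \<notin> D" "w0 \<notin> D" using S0 uw unfolding SD_def by auto
    have "card {u0, w0} \<le> card (V - D)" using u0 w0 ud fin by (intro card_mono) auto
    hence "2 \<le> card (V - D)" using uw by simp
    moreover have "card (V - D) = n - k" using card_Diff_subset[OF _ DV] fin DV cD cV finite_subset by metis
    ultimately have "k + 2 \<le> n" by simp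
    hence bl: "be < al" by (rule ba2)
    define g where "g u w = e u w * (1 - s u w)" for u w
    have gnn: "\<And>u w. g u w \<ge> 0" unfolding g_def e_def s_def ind_def by simp
    have trm: "(s u w - e u w) * c u w \<ge> al * be * (s u w - e u w) + (al * be - be * be) * g u w"
      if u: "u \<in> V" and w: "w \<in> V" for u w
    proof (cases "SD D u w")
      case True
      hence "g u w = 0" unfolding g_def s_def ind_def by simp
      moreover have "c u w \<ge> al * be"
      proof -
        have xu: "x u = al \<or> x u = be" and xw: "x w = al \<or> x w = be" using xD xR u w by auto
        have "al * al \<ge> al * be" using alp ba by (simp add: mult_left_mono)
        moreover have "be * al = al * be" by simp
        ultimately show ?thesis
          unfolding c_def using xu xw True unfolding SD_def using xD
          by (cases "u \<in> D"; cases "w \<in> D") auto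
      qed
      ultimately show ?thesis using True unfolding s_def e_def ind_def
        by (cases "E u w") auto
    next
      case False
      show ?thesis
      proof (cases "E u w")
        case True
        have "u \<noteq> w" using irr u True by blast
        hence "u \<notin> D" "w \<notin> D" using False unfolding SD_def by auto
        hence "c u w = be * be" unfolding c_def using xR u w by auto
        thus ?thesis using True False unfolding g_def s_def e_def ind_def by (simp add: algebra_simps)
      next
        case Fe: False
        thus ?thesis using False unfolding g_def s_def e_def ind_def by simp
      qed
    qed
    have "(\<Sum>u\<in>V. \<Sum>w\<in>V. al * be * (s u w - e u w) + (al * be - be * be) * g u w)
          \<le> (\<Sum>u\<in>V. \<Sum>w\<in>V. (s u w - e u w) * c u w)"
      using trm by (intro sum_mono) auto
    also have "\<dots> = 0" by (rule diff0)
    finally have "al * be * (\<Sum>u\<in>V. \<Sum>w\<in>V. s u w - e u w) + (al * be - be * be) * (\<Sum>u\<in>V. \<Sum>w\<in>V. g u w) \<le> 0"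
      by (simp add: sum.distrib sum_distrib_left)
    moreover have "al * be * (\<Sum>u\<in>V. \<Sum>w\<in>V. s u w - e u w) \<ge> 0" using cntd alp bep by simp
    moreover have "(\<Sum>u\<in>V. \<Sum>w\<in>V. g u w) \<ge> 1"
    proof -
      have "g u0 w0 = 1" using E0 S0 unfolding g_def e_def s_def ind_def by simp
      thus ?thesis using sum2_ge_term[OF fin _ u0 w0, of g] gnn by simp
    qed
    moreover have "al * be - be * be > 0" using bl bep by (simp add: mult_strict_right_mono)
    ultimately show False
      by (smt (verit, best) mult_le_cancel_left1)
  qed
  have "\<forall>u\<in>V. \<forall>w\<in>V. (s u w - e u w) * c u w = 0"
  proof (intro ballI)
    fix u w assume u: "u \<in> V" and w: "w \<in> V"
    show "(s u w - e u w) * c u w = 0"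
    proof (rule sum2_nonneg_eq_0[OF fin _ diff0 u w])
      fix u w assume u: "u \<in> V" and w: "w \<in> V"
      have "s u w - e u w \<ge> 0" using es u w unfolding s_def e_def ind_def by auto
      thus "(s u w - e u w) * c u w \<ge> 0" using cpos[OF u w] by simp
    qed
  qed
  hence "\<forall>u\<in>V. \<forall>w\<in>V. s u w = e u w" using cpos by (metis eq_iff_diff_eq_0 less_irrefl mult_eq_0_iff)
  thus ?thesis unfolding s_def e_def ind_def by (metis one_neq_zero)
qed

lemma adj_eigs: "adj_eigenvalues V E = eigs V (ind E)"
  unfolding adj_eigenvalues_def eigs_def ind_def by simp

lemma nsq_pos:
  assumes "finite V" "v \<in> V" "x v \<noteq> 0" shows "nsq V x > 0"
proof -
  have "(x v)^2 \<le> nsq V x" unfolding nsq_def using assms by (intro member_le_sum) auto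
  moreover have "(x v)^2 > 0" using assms by simp
  ultimately show ?thesis by linarith
qed

lemma eig_le:
  assumes fin: "finite V" and lam: "lam \<in> eigs V (ind F)" and bnd: "\<And>y. qf V F y \<le> r * nsq V y"
  shows "lam \<le> r"
proof -
  obtain z where nz: "\<exists>v\<in>V. z v \<noteq> 0" and ev: "\<forall>u\<in>V. (\<Sum>w\<in>V. ind F u w * z w) = lam * z u"
    using lam unfolding eigs_def by blast
  have "lam * nsq V z \<le> r * nsq V z" using qf_eig[OF ev] bnd[of z] by simp
  moreover have "nsq V z > 0" using nz nsq_pos[OF fin] by blast
  ultimately show ?thesis by simp
qed

lemma qf_SD_one:
  assumes fin: "finite U" and DU: "D \<subseteq> U" and cD: "card D = k" and cU: "card U = n"
  shows "qf U (SD D) (\<lambda>_. 1) = real k ^ 2 - real k + 2 * real k * (real n - real k)"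
proof -
  have finD: "finite D" using fin DU finite_subset by blast
  have "card (U - D) = n - k" using card_Diff_subset[OF finD DU] cD cU by simp
  moreover have "k \<le> n" using card_mono[OF fin DU] cD cU by simp
  ultimately show ?thesis using qf_SD[OF fin DU, of "\<lambda>_. 1"] cD by (simp add: of_nat_diff)
qed

lemma count_bound:
  assumes sg: "simple_graph V E" and dg: "degenerate k V E" and cV: "card V = n" and kn: "k \<le> n"
    and DV: "D \<subseteq> V" and cD: "card D = k"
  shows "qf V E (\<lambda>_. 1) \<le> qf V (SD D) (\<lambda>_. 1)"
proof -
  have fin: "finite V" using sg unfolding simple_graph_def by simp
  obtain D1 where D1: "D1 \<subseteq> V" "card D1 = k" and q: "qf V E (\<lambda>_. 1) \<le> qf V (SD D1) (\<lambda>_. 1)"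
    using degen_main[OF sg dg, of "\<lambda>_. 1" V n] cV kn by auto
  have "qf V (SD D1) (\<lambda>_. 1) = qf V (SD D) (\<lambda>_. 1)"
    using qf_SD_one[OF fin D1(1) D1(2) cV] qf_SD_one[OF fin DV cD cV] by simp
  thus ?thesis using q by simp
qed

lemma sum_split_k:
  fixes A B :: real
  assumes "k \<le> n"
  shows "(\<Sum>w\<in>{0..<n}. if w < k then A else B) = real k * A + (real n - real k) * B"
proof -
  have "(\<Sum>w\<in>{0..<n}. if w < k then A else B) = (\<Sum>w\<in>{0..<k}. if w < k then A else B) + (\<Sum>w\<in>{k..<n}. if w < k then A else B)"
    using sum.atLeastLessThan_concat[of 0 k n "\<lambda>w. if w < k then A else B"] assms by simp
  also have "(\<Sum>w\<in>{0..<k}. if w < k then A else B) = (\<Sum>w\<in>{0..<k}. A)" by (intro sum.cong) auto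
  also have "(\<Sum>w\<in>{k..<n}. if w < k then A else B) = (\<Sum>w\<in>{k..<n}. B)" by (intro sum.cong) auto
  finally show ?thesis using assms by (simp add: of_nat_diff)
qed

lemma S_mu:
  assumes kn: "k \<le> n" and n1: "n \<ge> 1"
  shows "mu (S_verts n) (S_edge k) = rho n k"
proof -
  define U where "U = {0..<n}"
  define D where "D = {0..<k}"
  define r where "r = rho n k"
  have SE: "S_edge k = SD D" unfolding D_def by (auto simp: fun_eq_iff S_edge_def SD_def)
  have fin: "finite U" unfolding U_def by simp
  have DU: "D \<subseteq> U" unfolding D_def U_def using kn by auto
  have cD: "card D = k" and cU: "card U = n" unfolding D_def U_def by auto
  have rf: "r^2 = (real k - 1) * r + real k * (real n - real k)" "r \<ge> real k - 1" "r \<ge> 0"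
    using rho_facts[OF kn] unfolding r_def by auto
  have A: "adj_eigenvalues (S_verts n) (S_edge k) = eigs U (ind (SD D))"
    unfolding adj_eigs SE S_verts_def U_def ..
  have up: "\<And>lam. lam \<in> eigs U (ind (SD D)) \<Longrightarrow> lam \<le> r"
    using eig_le[OF fin _ S_bound[OF fin DU cD cU]] unfolding r_def by blast
  have mem: "r \<in> eigs U (ind (SD D))"
  proof (cases "k = 0")
    case True
    hence "r = 0" unfolding r_def using rho_0 by simp
    moreover have "D = {}" unfolding D_def using True by simp
    ultimately have "\<forall>u\<in>U. (\<Sum>w\<in>U. ind (SD D) u w * 1) = r * 1"
      by (simp add: ind_def SD_def)
    moreover have "0 \<in> U" unfolding U_def using n1 by simp
    ultimately show ?thesis unfolding eigs_def by (intro CollectI exI[of _ "\<lambda>_. 1"]) auto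
  next
    case False
    define z where "z w = (if w < k then 1 else real k / r)" for w
    have eq: "\<forall>u\<in>U. (\<Sum>w\<in>U. ind (SD D) u w * z w) = r * z u"
    proof
      fix u assume u: "u \<in> U"
      show "(\<Sum>w\<in>U. ind (SD D) u w * z w) = r * z u"
      proof (cases "u < k")
        case True
        have "(\<Sum>w\<in>U. ind (SD D) u w * z w) = (\<Sum>w\<in>U. z w - (if w = u then z w else 0))"
          using True unfolding D_def by (intro sum.cong refl) (auto simp: ind_def SD_def)
        also have "\<dots> = (\<Sum>w\<in>U. z w) - z u" using u fin by (simp add: sum_subtractf)
        also have "(\<Sum>w\<in>U. z w) = real k * 1 + (real n - real k) * (real k / r)"
          unfolding U_def z_def by (rule sum_split_k[OF kn])
        also have "real k * 1 + (real n - real k) * (real k / r) - z u = r"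
        proof (cases "r = 0")
          case True
          hence "real k * (real n - real k) = 0" using rf(1) by simp
          hence "n = k" using False kn by simp
          moreover have "real k \<le> 1" using rf(2) True by simp
          ultimately show ?thesis using True \<open>u < k\<close> unfolding z_def by simp
        next
          case rnz: False
          have "r * r = (real k - 1) * r + real k * (real n - real k)" using rf(1) by (simp add: power2_eq_square)
          hence "r = (real k - 1) + real k * (real n - real k) / r" using rnz by (simp add: field_simps)
          moreover have "(real n - real k) * (real k / r) = real k * (real n - real k) / r" by simp
          moreover have "z u = 1" using \<open>u < k\<close> unfolding z_def by simp
          ultimately show ?thesis by linarith
        qed
        also have "r = r * z u" using True unfolding z_def by simp
        finally show ?thesis .
      next
        case False
        have nk: "k + 1 \<le> n" using False u unfolding U_def by simp
        have rk: "r \<ge> real k" using rho_gek(1)[of k n] nk \<open>k \<noteq> 0\<close> unfolding r_def by simp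
        have "(\<Sum>w\<in>U. ind (SD D) u w * z w) = (\<Sum>w\<in>U. if w < k then 1 else 0)"
          using False unfolding D_def z_def by (intro sum.cong refl) (auto simp: ind_def SD_def)
        also have "\<dots> = real k" unfolding U_def using sum_split_k[OF kn, of 1 0] by simp
        also have "\<dots> = r * z u" using False rk \<open>k \<noteq> 0\<close> unfolding z_def by simp
        finally show ?thesis .
      qed
    qed
    moreover have "0 \<in> U" "z 0 \<noteq> 0" unfolding U_def z_def using n1 False by auto
    ultimately show ?thesis unfolding eigs_def by blast
  qed
  have "Max (eigs U (ind (SD D))) = r"
    by (rule Max_eqI[OF eigs_finite[OF fin] up mem])
  thus ?thesis unfolding mu_def A r_def .
qed

theorem theorem1:
  fixes V :: "'a set" and E :: "'a \<Rightarrow> 'a \<Rightarrow> bool" and n k :: nat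
  assumes "simple_graph V E"
    and "card V = n"
    and "k \<le> n"
    and "degenerate k V E"
  shows "mu V E < mu (S_verts n) (S_edge k) \<or> graph_iso V E (S_verts n) (S_edge k)"
proof -
  note sg = assms(1) and cV = assms(2) and kn = assms(3) and dg = assms(4)
  have fin: "finite V" and symV: "\<forall>u\<in>V. \<forall>w\<in>V. E u w \<longrightarrow> E w u" and irrV: "\<forall>u\<in>V. \<not> E u u"
    using sg unfolding simple_graph_def by auto
  show ?thesis
  proof (cases "n = 0")
    case True
    hence "V = {}" using cV fin by simp
    hence "graph_iso V E (S_verts n) (S_edge k)" unfolding graph_iso_def S_verts_def using True
      by (intro exI[of _ "\<lambda>_. 0"]) (simp add: bij_betw_def)
    thus ?thesis by simp
  next
    case False
    hence n1: "n \<ge> 1" by simp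
    have Vne: "V \<noteq> {}" using False cV by auto
    define r where "r = rho n k"
    have muS: "mu (S_verts n) (S_edge k) = r" unfolding r_def by (rule S_mu[OF kn n1])
    have rf: "r^2 = (real k - 1) * r + real k * (real n - real k)" "r \<ge> real k - 1" "r \<ge> 0"
      using rho_facts[OF kn] unfolding r_def by auto
    have symI: "\<And>u w. u \<in> V \<Longrightarrow> w \<in> V \<Longrightarrow> ind E u w = ind E w u"
      using symV unfolding ind_def by metis
    have symE: "\<And>u w. u \<in> V \<Longrightarrow> w \<in> V \<Longrightarrow> E u w \<longleftrightarrow> E w u" using symV by blast
    obtain mu0 y where "(\<exists>u\<in>V. y u \<noteq> 0)" "(\<forall>u\<in>V. (\<Sum>w\<in>V. complex_of_real (ind E u w) * y w) = mu0 * y u)"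
      using complex_eig_exists[OF fin Vne, of "ind E"] by blast
    from real_eig_from_complex[OF fin symI this]
    have "eigs V (ind E) \<noteq> {}" unfolding eigs_def by blast
    hence lamin: "mu V E \<in> eigs V (ind E)" unfolding mu_def adj_eigs
      by (rule Max_in[OF eigs_finite[OF fin]])
    show ?thesis
    proof (cases "mu V E < r")
      case True thus ?thesis using muS by simp
    next
      case False
      define lam where "lam = mu V E"
      have lr: "r \<le> lam" using False unfolding lam_def by simp
      have "graph_iso V E (S_verts n) (S_edge k)"
      proof (cases "k = 0")
        case True
        have cnt: "qf V E (\<lambda>_. 1) \<le> qf V (SD {}) (\<lambda>_. 1)"
          using count_bound[OF sg dg cV kn, of "{}"] True by simp
        have "qf V (SD {}) (\<lambda>_. 1) = 0" unfolding qf_def ind_def SD_def by simp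
        hence z: "(\<Sum>u\<in>V. \<Sum>w\<in>V. ind E u w) = 0"
        proof -
          have "(\<Sum>u\<in>V. \<Sum>w\<in>V. ind E u w) = qf V E (\<lambda>_. 1)" unfolding qf_def by simp
          moreover have "(\<Sum>u\<in>V. \<Sum>w\<in>V. ind E u w) \<ge> 0" unfolding ind_def by (intro sum_nonneg) auto
          ultimately show ?thesis using cnt \<open>qf V (SD {}) (\<lambda>_. 1) = 0\<close> by simp
        qed
        have "\<forall>u\<in>V. \<forall>w\<in>V. E u w \<longleftrightarrow> SD {} u w"
        proof (intro ballI)
          fix u w assume u: "u \<in> V" and w: "w \<in> V"
          have "ind E u w = 0" by (rule sum2_nonneg_eq_0[OF fin _ z u w]) (simp add: ind_def)
          thus "E u w \<longleftrightarrow> SD {} u w" unfolding ind_def SD_def by (simp split: if_splits)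
        qed
        thus ?thesis using iso_SD[OF fin _ _ cV, of "{}" k E] True by simp
      next
        case k1: False
        obtain z where nz: "\<exists>v\<in>V. z v \<noteq> 0" and ev: "\<forall>u\<in>V. (\<Sum>w\<in>V. ind E u w * z w) = lam * z u"
          using lamin unfolding eigs_def lam_def by blast
        define x where "x u = \<bar>z u\<bar>" for u
        have nn: "\<forall>u\<in>V. 0 \<le> x u" unfolding x_def by simp
        obtain D where DV: "D \<subseteq> V" and cD: "card D = k" and qD: "qf V E x \<le> qf V (SD D) x"
          using degen_main[OF sg dg nn, of V n] cV kn by auto
        have finD: "finite D" using fin DV finite_subset by blast
        have e1: "qf V E z = lam * nsq V z" by (rule qf_eig[OF ev])
        have nx: "nsq V x = nsq V z" unfolding nsq_def x_def by simp
        have e2: "qf V E z \<le> qf V E x" unfolding x_def by (rule qf_abs)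
        have bndS: "\<And>y. qf V (SD D) y \<le> r * nsq V y" unfolding r_def by (rule S_bound[OF fin DV cD cV])
        define N where "N = nsq V x"
        have Npos: "N > 0" unfolding N_def nx using nz nsq_pos[OF fin] by blast
        have "r * N \<le> lam * N" using lr Npos by simp
        hence eqS: "qf V (SD D) x = r * nsq V x" and eqE: "qf V E x = qf V (SD D) x"
        proof -
          have e1': "qf V E z = lam * nsq V x" using e1 nx by simp
          show "qf V (SD D) x = r * nsq V x" using e1' e2 qD bndS[of x] \<open>r * N \<le> lam * N\<close> unfolding N_def by linarith
          show "qf V E x = qf V (SD D) x" using e1' e2 qD bndS[of x] \<open>r * N \<le> lam * N\<close> unfolding N_def by linarith
        qed
        have symS: "\<And>a b. a \<in> V \<Longrightarrow> b \<in> V \<Longrightarrow> SD D a b \<longleftrightarrow> SD D b a" unfolding SD_def by auto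
        have ray: "\<And>u. u \<in> V \<Longrightarrow> (\<Sum>w\<in>V. ind (SD D) u w * x w) = r * x u"
          by (rule rayleigh_eig[OF fin symS bndS eqS])
        define T where "T = (\<Sum>w\<in>V. x w)"
        define A where "A = (\<Sum>w\<in>D. x w)"
        define al where "al = T / (r + 1)"
        have xD: "\<forall>u\<in>D. x u = al"
        proof
          fix u assume u: "u \<in> D"
          have "(\<Sum>w\<in>V. ind (SD D) u w * x w) = (\<Sum>w\<in>V. x w - (if w = u then x w else 0))"
            using u by (intro sum.cong refl) (auto simp: ind_def SD_def)
          also have "\<dots> = T - x u" unfolding T_def using u DV fin by (simp add: sum_subtractf subsetD)
          finally have "T - x u = r * x u" using ray[of u] u DV by auto
          hence "T = (r + 1) * x u" by (simp add: algebra_simps)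
          thus "x u = al" unfolding al_def using rf(3) by simp
        qed
        have xR0: "\<forall>u\<in>V-D. r * x u = A"
        proof
          fix u assume u: "u \<in> V - D"
          have "(\<Sum>w\<in>V. ind (SD D) u w * x w) = (\<Sum>w\<in>V. if w \<in> D then x w else 0)"
            using u by (intro sum.cong refl) (auto simp: ind_def SD_def)
          also have "\<dots> = A" unfolding A_def using fin DV sum.inter_restrict[OF fin, of x D]
            by (simp add: Int_absorb1)
          finally show "r * x u = A" using ray[of u] u by auto
        qed
        have Aal: "A = real k * al" unfolding A_def using xD cD by simp
        obtain d where d: "d \<in> D" using cD k1 by fastforce
        have al0: "al \<ge> 0" using xD d nn DV by fastforce
        have rpos: "V - D \<noteq> {} \<Longrightarrow> r \<ge> real k \<and> r > 0"
        proof -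
          assume "V - D \<noteq> {}"
          hence "card (V - D) \<ge> 1" using fin by (simp add: Suc_le_eq card_gt_0_iff)
          moreover have "card (V - D) = n - k" using card_Diff_subset[OF finD DV] cD cV by simp
          ultimately have "k + 1 \<le> n" by simp
          hence "r \<ge> real k" using rho_gek(1)[of k n] k1 unfolding r_def by simp
          thus "r \<ge> real k \<and> r > 0" using k1 by simp
        qed
        have alp: "al > 0"
        proof (rule ccontr)
          assume "\<not> al > 0"
          hence al00: "al = 0" using al0 by simp
          have "\<forall>u\<in>V. x u = 0"
          proof
            fix u assume u: "u \<in> V"
            show "x u = 0"
            proof (cases "u \<in> D")
              case True thus ?thesis using xD al00 by simp
            next
              case False
              hence "V - D \<noteq> {}" using u by blast
              hence "r > 0" using rpos by blast
              moreover have "r * x u = 0" using xR0 u False Aal al00 by (metis DiffI mult_zero_right)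
              ultimately show ?thesis by simp
            qed
          qed
          hence "N = 0" unfolding N_def nsq_def by simp
          thus False using Npos by simp
        qed
        define be where "be = (if V - D = {} then al else real k * al / r)"
        have xR: "\<forall>u\<in>V-D. x u = be"
        proof
          fix u assume u: "u \<in> V - D"
          hence ne: "V - D \<noteq> {}" by blast
          hence "r > 0" using rpos by blast
          thus "x u = be" using xR0 u Aal ne unfolding be_def by (simp add: field_simps)
        qed
        have bep: "be > 0" and ba: "be \<le> al"
        proof -
          have "be > 0 \<and> be \<le> al"
          proof (cases "V - D = {}")
            case True thus ?thesis unfolding be_def using alp by simp
          next
            case False
            hence r: "r \<ge> real k" "r > 0" using rpos by auto
            have "real k * al / r \<le> al"
              using r alp by (simp add: divide_le_eq mult_right_mono mult.commute)
            moreover have "real k * al / r > 0" using r alp k1 by simp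
            ultimately show ?thesis unfolding be_def using False by simp
          qed
          thus "be > 0" "be \<le> al" by auto
        qed
        have ba2: "k + 2 \<le> n \<Longrightarrow> be < al"
        proof -
          assume kn2: "k + 2 \<le> n"
          have "card (V - D) = n - k" using card_Diff_subset[OF finD DV] cD cV by simp
          hence c2: "card (V - D) \<ge> 2" using kn2 by simp
          have ne: "V - D \<noteq> {}"
          proof
            assume "V - D = {}"
            thus False using c2 by (metis card.empty not_numeral_le_zero)
          qed
          have r: "r > real k" using rho_gek(2)[of k n] k1 kn2 unfolding r_def by simp
          hence "r > 0" using k1 by simp
          have "real k * al < r * al" using r alp by simp
          hence "real k * al / r < al" using \<open>r > 0\<close> by (simp add: divide_less_eq mult.commute)
          thus "be < al" unfolding be_def using ne by simp
        qed
        have cnt: "qf V E (\<lambda>_. 1) \<le> qf V (SD D) (\<lambda>_. 1)" by (rule count_bound[OF sg dg cV kn DV cD])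
        have "\<forall>u\<in>V. \<forall>w\<in>V. E u w \<longleftrightarrow> SD D u w"
          by (rule struct_eq[OF fin DV cD cV irrV cnt xD xR alp bep ba ba2 eqE])
        thus ?thesis by (rule iso_SD[OF fin DV cD cV])
      qed
      thus ?thesis by simp
    qed
  qed
qed

end
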